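(* Let $\mathcal L:\sum_{i=1}^kc_ix_i=0$ with $k\ge3$, $c_i\in\mathbb Z\setminus\{0\}$, let $I\subsetneq[k]$ with $|I|\ge3$ and $\sum_{i\in I}c_i=0$, and $J=[k]\setminus I$. Let $p>\max_i|c_i|$ be prime, and let $A\subseteq\mathbb F_p$ be $\mathcal L$-solution-free such that $A^I$ contains at least $\delta p^{|I|-1}$ solutions of $\sum_{i\in I}c_ix_i=0$, for some $\delta\in(0,1]$. Set $\nu=\delta/6$, $L=\{\xi\in\mathbb F_p:|\widehat{1_A}(\xi)|\ge\nu\}$, fix $s\in I$, $\Gamma=\{\eta\in\mathbb F_p:c_s\eta\in L\}$, $D=\sum_{i\in J}|c_i|$, $\rho=\frac{\delta^3}{216\pi D}$, and $B=\{x\in\mathbb F_p:\|\xi x\|_\tau\le\rho\ \forall\xi\in\Gamma\}$. If $p>6k^2\delta^{-1}$, then $|A\cap B|<k$.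
   Context: $\widehat{1_A}(\xi)=\frac1p\sum_{x\in A}e^{-2\pi i x\xi/p}$. For $x\in\mathbb F_p$ (identified with $\{0,\dots,p-1\}$), $\|x\|_\tau$ is the distance from $x/p$ to the nearest integer. $\mathcal L$-solution-free means no solution in $A^k$ with pairwise distinct entries. *)

theory Defs
  imports "HOL-Analysis.Analysis"
begin

text \<open>Elements of F_p are identified with {0..<p} (as naturals).
  Equations are indexed by {..<k} (i.e. [k] shifted to 0-based).\<close>

definition fourier_ind :: "nat \<Rightarrow> nat set \<Rightarrow> nat \<Rightarrow> complex" where
  "fourier_ind p A \<xi> = (1 / of_nat p) *
     (\<Sum>x\<in>A. cis (- 2 * pi * real x * real \<xi> / real p))"

definition tau_norm :: "nat \<Rightarrow> nat \<Rightarrow> real" where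
  "tau_norm p y = \<bar>real y / real p - of_int (round (real y / real p))\<bar>"

definition solution_free :: "nat \<Rightarrow> nat \<Rightarrow> (nat \<Rightarrow> int) \<Rightarrow> nat set \<Rightarrow> bool" where
  "solution_free p k c A \<longleftrightarrow>
     \<not> (\<exists>x. (\<forall>i<k. x i \<in> A) \<and> inj_on x {..<k} \<and>
            (\<Sum>i<k. c i * int (x i)) mod int p = 0)"

definition num_solutions :: "nat \<Rightarrow> nat set \<Rightarrow> (nat \<Rightarrow> int) \<Rightarrow> nat set \<Rightarrow> nat" where
  "num_solutions p I c A =
     card {x \<in> Pi\<^sub>E I (\<lambda>_. A). (\<Sum>i\<in>I. c i * int (x i)) mod int p = 0}"

end

theory Submission imports Defs begin

definition ee :: "nat \<Rightarrow> int \<Rightarrow> complex" where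
  "ee p m = cis (2 * pi * of_int m / real p)"

definition GG :: "nat \<Rightarrow> nat set \<Rightarrow> int \<Rightarrow> complex" where
  "GG p A m = (1 / of_nat p) * (\<Sum>a\<in>A. ee p (m * int a))"

definition dn :: "real \<Rightarrow> real" where
  "dn r = \<bar>r - of_int (round r)\<bar>"

lemma ee_add: "ee p (a + b) = ee p a * ee p b"
  unfolding ee_def cis_mult by (simp add: algebra_simps add_divide_distrib)

lemma ee_zero[simp]: "ee p 0 = 1"
  unfolding ee_def by simp

lemma norm_ee[simp]: "norm (ee p m) = 1"
  unfolding ee_def by simp

lemma ee_sum: "finite S \<Longrightarrow> ee p (\<Sum>i\<in>S. f i) = (\<Prod>i\<in>S. ee p (f i))"
  by (induction S rule: finite_induct) (auto simp: ee_add)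

lemma ee_mult_p: "p > 0 \<Longrightarrow> ee p (int p * q) = 1"
proof -
  assume "p > 0"
  then have "2 * pi * of_int (int p * q) / real p = 2 * pi * of_int q" by simp
  then show ?thesis unfolding ee_def by simp
qed

lemma ee_mod: "p > 0 \<Longrightarrow> ee p (m mod int p) = ee p m"
proof -
  assume p: "p > 0"
  have "ee p m = ee p (m mod int p + int p * (m div int p))" by simp
  also have "\<dots> = ee p (m mod int p)" using p by (simp only: ee_add ee_mult_p) simp
  finally show ?thesis by simp
qed

lemma ee_orth:
  assumes p: "p > 0"
  shows "(\<Sum>\<xi><p. ee p (int \<xi> * m)) = (if int p dvd m then of_nat p else 0)"
proof (cases "int p dvd m")
  case True
  then obtain q where q: "m = int p * q" by blast
  have "ee p (int \<xi> * m) = 1" for \<xi>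
    using ee_mult_p[OF p, of "int \<xi> * q"] q by (simp add: algebra_simps)
  then show ?thesis using True by simp
next
  case False
  define z where "z = ee p m"
  have pw: "ee p (int \<xi> * m) = z ^ \<xi>" for \<xi>
  proof -
    have "z ^ \<xi> = cis (real \<xi> * (2 * pi * of_int m / real p))" unfolding z_def ee_def by (rule Complex.DeMoivre)
    also have "\<dots> = ee p (int \<xi> * m)" unfolding ee_def by (simp add: algebra_simps)
    finally show ?thesis by simp
  qed
  have zp: "z ^ p = 1" using pw[of p] ee_mult_p[OF p, of m] by simp
  have z1: "z \<noteq> 1"
  proof
    assume "z = 1"
    then have "exp (\<i> * complex_of_real (2 * pi * of_int m / real p)) = 1"
      unfolding z_def ee_def cis_conv_exp by simp
    then obtain n :: int where "2 * pi * of_int m / real p = of_int (2 * n) * pi"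
      unfolding exp_eq_1 by auto
    then have "real_of_int m = real p * of_int n" using p by (simp add: cis_cnj field_simps)
    then have "m = int p * n" by (metis of_int_eq_iff of_int_mult of_int_of_nat_eq)
    then show False using False by simp
  qed
  have "(\<Sum>\<xi><p. ee p (int \<xi> * m)) = (\<Sum>\<xi><p. z ^ \<xi>)" using pw by simp
  also have "\<dots> = 0" using z1 zp by (simp add: sum_gp_strict)
  finally show ?thesis using False by simp
qed

lemma norm_1_cis: "norm (1 - cis t) \<le> \<bar>t\<bar>"
proof -
  have "(norm (1 - cis t))^2 = (1 - cos t)^2 + (sin t)^2"
    by (simp add: cmod_def)
  also have "\<dots> = 2 - 2 * cos t" using sin_cos_squared_add[of t] by (simp add: power2_eq_square algebra_simps)
  also have "\<dots> = 4 * (sin (t/2))^2" using cos_double_sin[of "t/2"] by simp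
  also have "\<dots> \<le> 4 * (t/2)^2"
    using abs_sin_x_le_abs_x[of "t/2"] by (simp only: abs_le_square_iff[symmetric] mult_le_cancel_left) simp
  also have "\<dots> = t^2" by (simp add: power2_eq_square)
  finally show ?thesis using abs_le_square_iff by (metis abs_norm_cancel)
qed

lemma dn_le: "dn r \<le> \<bar>r - of_int m\<bar>"
  unfolding dn_def by (rule round_diff_minimal)

lemma dn_add_int: "dn (r + of_int n) = dn r"
proof (rule antisym)
  show "dn (r + of_int n) \<le> dn r"
    using dn_le[of "r + of_int n" "round r + n"] unfolding dn_def by simp
  show "dn r \<le> dn (r + of_int n)"
    using dn_le[of r "round (r + of_int n) - n"] unfolding dn_def by (simp add: algebra_simps)
qed

lemma dn_add: "dn (r + s) \<le> dn r + dn s"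
  using dn_le[of "r+s" "round r + round s"] unfolding dn_def by simp

lemma dn_mult_int: "dn (of_int n * r) \<le> \<bar>of_int n\<bar> * dn r"
proof -
  have "dn (of_int n * r) \<le> \<bar>of_int n * r - of_int (n * round r)\<bar>" by (rule dn_le)
  also have "\<dots> = \<bar>of_int n\<bar> * dn r" unfolding dn_def by (simp add: abs_mult[symmetric] algebra_simps)
  finally show ?thesis .
qed

lemma dn_sum: "finite S \<Longrightarrow> dn (\<Sum>i\<in>S. f i) \<le> (\<Sum>i\<in>S. dn (f i))"
proof (induction S rule: finite_induct)
  case empty then show ?case by (simp add: dn_def)
next
  case (insert x S)
  then show ?case using dn_add[of "f x" "sum f S"] by simp
qed

lemma norm_1_ee: "p > 0 \<Longrightarrow> norm (1 - ee p m) \<le> 2 * pi * dn (of_int m / real p)"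
proof -
  assume p: "p > 0"
  define r where "r = of_int m / real p"
  have "ee p m = cis (2 * pi * r)" unfolding ee_def r_def by simp
  also have "\<dots> = cis (2 * pi * (r - of_int (round r))) * cis (2 * pi * of_int (round r))"
    by (simp add: cis_mult algebra_simps)
  also have "\<dots> = cis (2 * pi * (r - of_int (round r)))" by simp
  finally have "norm (1 - ee p m) \<le> \<bar>2 * pi * (r - of_int (round r))\<bar>"
    using norm_1_cis by simp
  then show ?thesis unfolding dn_def r_def by (simp add: abs_mult)
qed

lemma tau_norm_dn: "p > 0 \<Longrightarrow> tau_norm p ((a * b) mod p) = dn (real a * real b / real p)"
proof -
  assume p: "p > 0"
  have "real ((a * b) mod p) = real a * real b - real p * of_int (int ((a*b) div p))"
    by (metis mod_mult_div_eq add_diff_cancel_right' of_int_of_nat_eq of_nat_add of_nat_mult mult.commute)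
  then have "real ((a * b) mod p) / real p = real a * real b / real p + of_int (- int ((a*b) div p))"
    using p by (simp add: cis_cnj field_simps)
  then have "tau_norm p ((a * b) mod p) = dn (real a * real b / real p + of_int (- int ((a*b) div p)))"
    unfolding tau_norm_def dn_def by simp
  then show ?thesis by (simp only: dn_add_int)
qed


lemma cnj_ee: "cnj (ee p m) = ee p (- m)"
  unfolding ee_def cis_cnj by simp

lemma count_fourier:
  assumes "finite P" "p > 0"
  shows "of_nat (card {x\<in>P. f x mod int p = 0}) * of_nat p
         = (\<Sum>x\<in>P. \<Sum>\<xi><p. ee p (int \<xi> * f x))"
proof -
  have "(\<Sum>x\<in>P. \<Sum>\<xi><p. ee p (int \<xi> * f x)) = (\<Sum>x\<in>P. if int p dvd f x then of_nat p else 0)"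
    using ee_orth[OF assms(2)] by simp
  also have "\<dots> = (\<Sum>x\<in>{x\<in>P. f x mod int p = 0}. of_nat p)"
    using assms(1) by (simp add: sum.If_cases dvd_eq_mod_eq_0 Int_def conj_commute)
  also have "\<dots> = of_nat (card {x\<in>P. f x mod int p = 0}) * of_nat p" by simp
  finally show ?thesis by simp
qed

lemma sol_fourier:
  assumes "finite I" "finite A" "p > 0"
  shows "of_nat (card {x\<in>Pi\<^sub>E I (\<lambda>_. A). ((\<Sum>i\<in>I. c i * int (x i)) + t) mod int p = 0}) * of_nat p
    = (\<Sum>\<xi><p. ee p (int \<xi> * t) * (\<Prod>i\<in>I. of_nat p * GG p A (c i * int \<xi>)))"
proof -
  have fin: "finite (Pi\<^sub>E I (\<lambda>_. A))" using assms by (simp add: finite_PiE)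
  have "of_nat (card {x\<in>Pi\<^sub>E I (\<lambda>_. A). ((\<Sum>i\<in>I. c i * int (x i)) + t) mod int p = 0}) * of_nat p
     = (\<Sum>x\<in>Pi\<^sub>E I (\<lambda>_. A). \<Sum>\<xi><p. ee p (int \<xi> * ((\<Sum>i\<in>I. c i * int (x i)) + t)))"
    by (rule count_fourier[OF fin assms(3)])
  also have "\<dots> = (\<Sum>\<xi><p. \<Sum>x\<in>Pi\<^sub>E I (\<lambda>_. A). ee p (int \<xi> * ((\<Sum>i\<in>I. c i * int (x i)) + t)))"
    by (rule sum.swap)
  also have "\<dots> = (\<Sum>\<xi><p. ee p (int \<xi> * t) * (\<Prod>i\<in>I. of_nat p * GG p A (c i * int \<xi>)))"
  proof (rule sum.cong[OF refl])
    fix \<xi> assume "\<xi> \<in> {..<p}"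
    have "(\<Sum>x\<in>Pi\<^sub>E I (\<lambda>_. A). ee p (int \<xi> * ((\<Sum>i\<in>I. c i * int (x i)) + t)))
       = (\<Sum>x\<in>Pi\<^sub>E I (\<lambda>_. A). ee p (int \<xi> * t) * (\<Prod>i\<in>I. ee p (c i * int \<xi> * int (x i))))"
    proof (rule sum.cong[OF refl])
      fix x
      have "int \<xi> * ((\<Sum>i\<in>I. c i * int (x i)) + t) = int \<xi> * t + (\<Sum>i\<in>I. c i * int \<xi> * int (x i))"
        by (simp add: sum_distrib_left algebra_simps)
      then show "ee p (int \<xi> * ((\<Sum>i\<in>I. c i * int (x i)) + t)) = ee p (int \<xi> * t) * (\<Prod>i\<in>I. ee p (c i * int \<xi> * int (x i)))"
        using ee_sum[OF assms(1)] by (simp add: ee_add)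
    qed
    also have "\<dots> = ee p (int \<xi> * t) * (\<Sum>x\<in>Pi\<^sub>E I (\<lambda>_. A). (\<Prod>i\<in>I. ee p (c i * int \<xi> * int (x i))))"
      by (simp add: sum_distrib_left)
    also have "(\<Sum>x\<in>Pi\<^sub>E I (\<lambda>_. A). (\<Prod>i\<in>I. ee p (c i * int \<xi> * int (x i))))
        = (\<Prod>i\<in>I. \<Sum>a\<in>A. ee p (c i * int \<xi> * int a))"
      by (rule prod_sum_PiE[symmetric]) (use assms in auto)
    also have "\<dots> = (\<Prod>i\<in>I. of_nat p * GG p A (c i * int \<xi>))"
      unfolding GG_def using assms(3) by simp
    finally show "(\<Sum>x\<in>Pi\<^sub>E I (\<lambda>_. A). ee p (int \<xi> * ((\<Sum>i\<in>I. c i * int (x i)) + t)))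
       = ee p (int \<xi> * t) * (\<Prod>i\<in>I. of_nat p * GG p A (c i * int \<xi>))" .
  qed
  finally show ?thesis .
qed

lemma parseval:
  assumes p: "prime p" and A: "A \<subseteq> {..<p}" and c: "\<not> int p dvd c"
  shows "(\<Sum>\<xi><p. (norm (GG p A (c * int \<xi>)))^2) = real (card A) / real p"
proof -
  have p0: "p > 0" using p prime_gt_0_nat by blast
  have finA: "finite A" using A finite_subset by blast
  have key: "int p dvd c * (int a - int b) \<longleftrightarrow> a = b" if "a \<in> A" "b \<in> A" for a b
  proof
    assume "int p dvd c * (int a - int b)"
    then have "int p dvd (int a - int b)" using c p by (simp add: prime_dvd_mult_iff)
    moreover have "a < p" "b < p" using that A by auto
    ultimately show "a = b"
    proof -
      assume d: "int p dvd (int a - int b)" and "a < p" "b < p"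
      show "a = b"
      proof (rule ccontr)
        assume "a \<noteq> b"
        then have "int a - int b \<noteq> 0" by simp
        then have "\<bar>int p\<bar> \<le> \<bar>int a - int b\<bar>" using d dvd_imp_le_int by blast
        then show False using \<open>a < p\<close> \<open>b < p\<close> by linarith
      qed
    qed
  qed simp
  have "complex_of_real (\<Sum>\<xi><p. (norm (GG p A (c * int \<xi>)))^2)
      = (\<Sum>\<xi><p. GG p A (c * int \<xi>) * cnj (GG p A (c * int \<xi>)))"
    unfolding of_real_sum by (simp only: complex_norm_square)
  also have "\<dots> = (\<Sum>\<xi><p. (1 / (of_nat p)^2) * (\<Sum>a\<in>A. \<Sum>b\<in>A. ee p (int \<xi> * (c * (int a - int b)))))"
  proof (rule sum.cong[OF refl])
    fix \<xi>
    have "GG p A (c * int \<xi>) * cnj (GG p A (c * int \<xi>))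
       = (1 / (of_nat p)^2) * ((\<Sum>a\<in>A. ee p (c * int \<xi> * int a)) * (\<Sum>b\<in>A. ee p (- (c * int \<xi> * int b))))"
      unfolding GG_def by (simp add: cnj_ee power2_eq_square)
    also have "\<dots> = (1 / (of_nat p)^2) * (\<Sum>a\<in>A. \<Sum>b\<in>A. ee p (int \<xi> * (c * (int a - int b))))"
      proof -
      have "ee p (c * int \<xi> * int a) * ee p (- (c * int \<xi> * int b)) = ee p (int \<xi> * (c * (int a - int b)))" for a b
      proof -
        have "ee p (c * int \<xi> * int a) * ee p (- (c * int \<xi> * int b)) = ee p (c * int \<xi> * int a + (- (c * int \<xi> * int b)))"
          by (simp only: ee_add)
        also have "c * int \<xi> * int a + (- (c * int \<xi> * int b)) = int \<xi> * (c * (int a - int b))"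
          by (simp add: algebra_simps)
        finally show ?thesis .
      qed
      then show ?thesis unfolding sum_product by simp
    qed
    finally show "GG p A (c * int \<xi>) * cnj (GG p A (c * int \<xi>)) = \<dots>" .
  qed
  also have "\<dots> = (1 / (of_nat p)^2) * (\<Sum>a\<in>A. \<Sum>b\<in>A. \<Sum>\<xi><p. ee p (int \<xi> * (c * (int a - int b))))"
  proof -
    have "(\<Sum>\<xi><p. (1 / (of_nat p)^2) * (\<Sum>a\<in>A. \<Sum>b\<in>A. ee p (int \<xi> * (c * (int a - int b)))))
      = (1 / (of_nat p)^2) * (\<Sum>\<xi><p. \<Sum>a\<in>A. \<Sum>b\<in>A. ee p (int \<xi> * (c * (int a - int b))))"
      by (simp only: sum_distrib_left)
    also have "(\<Sum>\<xi><p. \<Sum>a\<in>A. \<Sum>b\<in>A. ee p (int \<xi> * (c * (int a - int b))))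
       = (\<Sum>a\<in>A. \<Sum>\<xi><p. \<Sum>b\<in>A. ee p (int \<xi> * (c * (int a - int b))))"
      by (rule sum.swap)
    also have "\<dots> = (\<Sum>a\<in>A. \<Sum>b\<in>A. \<Sum>\<xi><p. ee p (int \<xi> * (c * (int a - int b))))"
      by (rule sum.cong[OF refl], rule sum.swap)
    finally show ?thesis .
  qed
  also have "\<dots> = (1 / (of_nat p)^2) * (\<Sum>a\<in>A. \<Sum>b\<in>A. if a = b then of_nat p else 0)"
    proof -
    have "(\<Sum>\<xi><p. ee p (int \<xi> * (c * (int a - int b)))) = (if a = b then of_nat p else 0)" if "a \<in> A" "b \<in> A" for a b
      using key[OF that] ee_orth[OF p0, of "c * (int a - int b)"] by simp
    then show ?thesis by (intro arg_cong[where f="\<lambda>x. _ * x"] sum.cong refl) auto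
  qed
  also have "\<dots> = (1 / (of_nat p)^2) * (of_nat (card A) * of_nat p)"
    using finA by simp
  also have "\<dots> = complex_of_real (real (card A) / real p)"
    using p0 by (simp add: power2_eq_square)
  finally show ?thesis using of_real_eq_iff by blast
qed

lemma fourier_GG:
  assumes "p > 0"
  shows "norm (fourier_ind p A (nat (m mod int p))) = norm (GG p A m)"
proof -
  have "fourier_ind p A (nat (m mod int p)) = cnj (GG p A (m mod int p))"
  proof -
    have r: "real (nat (m mod int p)) = of_int (m mod int p)" using assms by simp
    have "cnj (GG p A (m mod int p)) = (1 / of_nat p) * (\<Sum>a\<in>A. cnj (ee p (m mod int p * int a)))"
      unfolding GG_def by simp
    also have "\<dots> = (1 / of_nat p) * (\<Sum>a\<in>A. cis (- 2 * pi * real a * real (nat (m mod int p)) / real p))"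
      unfolding cnj_ee ee_def r by (intro arg_cong[where f="\<lambda>x. _ * x"] sum.cong refl arg_cong[where f=cis]) (simp add: cis_cnj field_simps)
    finally show ?thesis unfolding fourier_ind_def by simp
  qed
  also have "GG p A (m mod int p) = GG p A m"
    unfolding GG_def
  proof (intro arg_cong[where f = "\<lambda>x. _ * x"] sum.cong refl)
    fix a
    have "ee p (m mod int p * int a) = ee p ((m mod int p * int a) mod int p)" using ee_mod[OF assms] by simp
    also have "\<dots> = ee p ((m * int a) mod int p)" by (simp add: mod_mult_left_eq)
    also have "\<dots> = ee p (m * int a)" using ee_mod[OF assms] by simp
    finally show "ee p (m mod int p * int a) = ee p (m * int a)" .
  qed
  finally show ?thesis by simp
qed


lemma norm_GG_le:
  assumes "A \<subseteq> {..<p}" "p > 0"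
  shows "norm (GG p A m) \<le> 1"
proof -
  have fin: "finite A" using assms(1) finite_subset by blast
  have cA: "card A \<le> p" using card_mono[OF _ assms(1)] by simp
  have "norm (\<Sum>a\<in>A. ee p (m * int a)) \<le> (\<Sum>a\<in>A. norm (ee p (m * int a)))" by (rule norm_sum)
  also have "\<dots> = real (card A)" by simp
  finally have "norm (\<Sum>a\<in>A. ee p (m * int a)) \<le> real (card A)" .
  then have "norm (\<Sum>a\<in>A. ee p (m * int a)) / real p \<le> real (card A) / real p"
    by (rule divide_right_mono) simp
  moreover have "norm (GG p A m) = norm (\<Sum>a\<in>A. ee p (m * int a)) / real p"
    unfolding GG_def by (simp add: norm_mult norm_divide)
  ultimately have "norm (GG p A m) \<le> real (card A) / real p" by simp
  also have "\<dots> \<le> 1" using cA assms(2) by simp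
  finally show ?thesis .
qed

lemma prod_le3:
  fixes f :: "nat \<Rightarrow> real"
  assumes "finite I" "s \<in> I" "u \<in> I" "v \<in> I" "s \<noteq> u" "s \<noteq> v" "u \<noteq> v"
    and "\<And>i. i \<in> I \<Longrightarrow> 0 \<le> f i \<and> f i \<le> 1"
  shows "(\<Prod>i\<in>I. f i) \<le> f s * f u * f v"
proof -
  have sub: "{s,u,v} \<subseteq> I" using assms by auto
  have "(\<Prod>i\<in>I. f i) = (\<Prod>i\<in>I - {s,u,v}. f i) * (\<Prod>i\<in>{s,u,v}. f i)"
    using prod.subset_diff[OF sub assms(1)] by simp
  also have "(\<Prod>i\<in>{s,u,v}. f i) = f s * f u * f v" using assms(5-7) by simp
  also have "(\<Prod>i\<in>I - {s,u,v}. f i) \<le> 1" using assms(8) by (intro prod_le_1) auto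
  moreover have "0 \<le> f s * f u * f v" using assms(2-4,8) by simp
  ultimately show ?thesis using mult_right_mono[of "(\<Prod>i\<in>I - {s,u,v}. f i)" 1 "f s * f u * f v"] by simp
qed

lemma card_restrict_le:
  assumes "S \<subseteq> Pi\<^sub>E I (\<lambda>_. {..<p})" "finite I" "r \<in> I" "q \<in> I" "r \<noteq> q"
    and "inj_on (\<lambda>x. restrict x (I - {r,q})) S"
  shows "card S \<le> p ^ (card I - 2)"
proof -
  have "card S \<le> card (Pi\<^sub>E (I - {r,q}) (\<lambda>_. {..<p}))"
  proof (rule card_inj_on_le[OF assms(6)])
    show "(\<lambda>x. restrict x (I - {r, q})) ` S \<subseteq> Pi\<^sub>E (I - {r, q}) (\<lambda>_. {..<p})"
      using assms(1) by (auto simp: PiE_def Pi_def)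
    show "finite (Pi\<^sub>E (I - {r, q}) (\<lambda>_. {..<p}))" using assms(2) by (simp add: finite_PiE)
  qed
  also have "\<dots> = p ^ card (I - {r,q})" using assms(2) by (simp add: card_PiE)
  also have "card (I - {r,q}) = card I - 2" using assms(2-5) by (simp add: card_Diff_subset)
  finally show ?thesis .
qed

lemma sol_determined:
  assumes p: "prime p" and fin: "finite I" and r: "r \<in> I" and cr: "\<not> int p dvd c r"
    and x: "x \<in> Pi\<^sub>E I (\<lambda>_. {..<p})" and x': "x' \<in> Pi\<^sub>E I (\<lambda>_. {..<p})"
    and ex: "((\<Sum>i\<in>I. c i * int (x i)) + t) mod int p = 0"
    and ex': "((\<Sum>i\<in>I. c i * int (x' i)) + t) mod int p = 0"
    and agree: "\<And>j. j \<in> I - {r} \<Longrightarrow> x j = x' j"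
  shows "x = x'"
proof -
  have sx: "(\<Sum>i\<in>I. c i * int (x i)) = c r * int (x r) + (\<Sum>i\<in>I - {r}. c i * int (x i))"
    using sum.remove[OF fin r] by simp
  have sx': "(\<Sum>i\<in>I. c i * int (x' i)) = c r * int (x' r) + (\<Sum>i\<in>I - {r}. c i * int (x i))"
    using sum.remove[OF fin r] agree by simp
  have "int p dvd ((\<Sum>i\<in>I. c i * int (x i)) + t) - ((\<Sum>i\<in>I. c i * int (x' i)) + t)"
  proof -
    have "((\<Sum>i\<in>I. c i * int (x i)) + t) mod int p = ((\<Sum>i\<in>I. c i * int (x' i)) + t) mod int p"
      using ex ex' by simp
    then show ?thesis by (simp only: mod_eq_dvd_iff)
  qed
  then have "int p dvd c r * (int (x r) - int (x' r))" using sx sx' by (simp add: algebra_simps)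
  then have d: "int p dvd (int (x r) - int (x' r))" using cr p by (simp add: prime_dvd_mult_iff)
  have "x r < p" "x' r < p" using x x' r by (auto simp: PiE_def Pi_def)
  have xr: "x r = x' r"
  proof (rule ccontr)
    assume "x r \<noteq> x' r"
    then have "int (x r) - int (x' r) \<noteq> 0" by simp
    then have "\<bar>int p\<bar> \<le> \<bar>int (x r) - int (x' r)\<bar>" using d dvd_imp_le_int by blast
    then show False using \<open>x r < p\<close> \<open>x' r < p\<close> by linarith
  qed
  show ?thesis
  proof (rule PiE_ext[OF x x'])
    fix j assume "j \<in> I" then show "x j = x' j" using agree xr by (cases "j = r") auto
  qed
qed

theorem mainTheorem11:
  fixes k p s :: nat and c :: "nat \<Rightarrow> int" and I A :: "nat set" and \<delta> :: real
  assumes "k \<ge> 3"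
    and "\<forall>i<k. c i \<noteq> 0"
    and "I \<subset> {..<k}" and "card I \<ge> 3"
    and "(\<Sum>i\<in>I. c i) = 0"
    and "prime p" and "\<forall>i<k. \<bar>c i\<bar> < int p"
    and "A \<subseteq> {..<p}"
    and "solution_free p k c A"
    and "0 < \<delta>" and "\<delta> \<le> 1"
    and "real (num_solutions p I c A) \<ge> \<delta> * real p ^ (card I - 1)"
    and "s \<in> I"
    and "real p > 6 * real k ^ 2 / \<delta>"
  shows "let J = {..<k} - I;
             \<nu> = \<delta> / 6;
             L = {\<xi>\<in>{..<p}. norm (fourier_ind p A \<xi>) \<ge> \<nu>};
             \<Gamma> = {\<eta>\<in>{..<p}. nat ((c s * int \<eta>) mod int p) \<in> L};
             D = (\<Sum>i\<in>J. \<bar>c i\<bar>);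
             \<rho> = \<delta> ^ 3 / (216 * pi * real_of_int D);
             B = {x\<in>{..<p}. \<forall>\<xi>\<in>\<Gamma>. tau_norm p ((\<xi> * x) mod p) \<le> \<rho>}
         in card (A \<inter> B) < k"
proof -
  define J where "J = {..<k} - I"
  define \<nu> where "\<nu> = \<delta> / 6"
  define L where "L = {\<xi>\<in>{..<p}. norm (fourier_ind p A \<xi>) \<ge> \<nu>}"
  define \<Gamma> where "\<Gamma> = {\<eta>\<in>{..<p}. nat ((c s * int \<eta>) mod int p) \<in> L}"
  define D where "D = (\<Sum>i\<in>J. \<bar>c i\<bar>)"
  define \<rho> where "\<rho> = \<delta> ^ 3 / (216 * pi * real_of_int D)"
  define B where "B = {x\<in>{..<p}. \<forall>\<xi>\<in>\<Gamma>. tau_norm p ((\<xi> * x) mod p) \<le> \<rho>}"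
  have p0: "p > 0" using assms(6) prime_gt_0_nat by blast
  have finA: "finite A" using assms(8) finite_subset by blast
  have Isub: "I \<subseteq> {..<k}" using assms(3) by auto
  have finI: "finite I" using Isub finite_subset by blast
  have finJ: "finite J" unfolding J_def by simp
  have IJ: "{..<k} = I \<union> J" "I \<inter> J = {}" using Isub unfolding J_def by auto
  have Jne: "J \<noteq> {}" using assms(3) unfolding J_def by auto
  have cnd: "\<not> int p dvd c i" if "i < k" for i
  proof
    assume "int p dvd c i"
    moreover have "c i \<noteq> 0" using assms(2) that by simp
    ultimately have "\<bar>int p\<bar> \<le> \<bar>c i\<bar>" using dvd_imp_le_int by blast
    moreover have "\<bar>c i\<bar> < int p" using assms(7) that by simp
    ultimately show False by simp
  qed
  have Dpos: "D > 0"
  proof -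
    obtain j where j: "j \<in> J" using Jne by blast
    then have "j < k" unfolding J_def by simp
    then have "\<bar>c j\<bar> > 0" using assms(2) by simp
    then show ?thesis unfolding D_def using finJ j by (intro sum_pos2) auto
  qed
  have "card (A \<inter> B) < k"
  proof (rule ccontr)
    assume "\<not> card (A \<inter> B) < k"
    moreover have "card J \<le> k" unfolding J_def using card_mono[of "{..<k}" "{..<k} - I"] by auto
    ultimately have cAB: "card J \<le> card (A \<inter> B)" by simp
    obtain b where b: "b ` J \<subseteq> A \<inter> B" "inj_on b J"
      using card_le_inj[OF finJ _ cAB] finA by auto
    define t where "t = (\<Sum>j\<in>J. c j * int (b j))"
    have "card (I - {s}) \<ge> 2" using assms(4,13) finI by simp
    then have "I - {s} \<noteq> {}" by (metis card.empty not_numeral_le_zero)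
    then obtain u where u: "u \<in> I" "u \<noteq> s" by blast
    have "card (I - {s,u}) \<ge> 1" using assms(4,13) finI u by (simp add: card_Diff_subset)
    then have "I - {s,u} \<noteq> {}" by (metis card.empty not_one_le_zero)
    then obtain v where v: "v \<in> I" "v \<noteq> s" "v \<noteq> u" by blast
    define G where "G = (\<lambda>i \<xi>. GG p A (c i * int \<xi>))"
    define S where "S = (\<lambda>\<xi>::nat. \<Prod>i\<in>I. G i \<xi>)"
    define N where "N = (\<lambda>t0. card {x\<in>Pi\<^sub>E I (\<lambda>_. A). ((\<Sum>i\<in>I. c i * int (x i)) + t0) mod int p = 0})"
    have cI: "card I = Suc (card I - 1)" using assms(4) by simp
    have NF: "(of_nat (N t0) :: complex) = of_nat p ^ (card I - 1) * (\<Sum>\<xi><p. ee p (int \<xi> * t0) * S \<xi>)" for t0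
    proof -
      have "(of_nat (N t0) :: complex) * of_nat p = (\<Sum>\<xi><p. ee p (int \<xi> * t0) * (\<Prod>i\<in>I. of_nat p * GG p A (c i * int \<xi>)))"
        unfolding N_def by (rule sol_fourier[OF finI finA p0])
      also have "\<dots> = (\<Sum>\<xi><p. ee p (int \<xi> * t0) * (of_nat p ^ card I * S \<xi>))"
        unfolding S_def G_def by (simp add: prod.distrib)
      also have "\<dots> = of_nat p * (of_nat p ^ (card I - 1) * (\<Sum>\<xi><p. ee p (int \<xi> * t0) * S \<xi>))"
        by (subst cI) (simp add: sum_distrib_left algebra_simps)
      finally show ?thesis using p0 by (simp add: mult.commute)
    qed
    have N0: "N 0 = num_solutions p I c A" unfolding N_def num_solutions_def by simp
    have diff: "(of_nat (N 0) :: complex) - of_nat (N t) = of_nat p ^ (card I - 1) * (\<Sum>\<xi><p. (1 - ee p (int \<xi> * t)) * S \<xi>)"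
      using NF[of 0] NF[of t] by (simp add: sum_subtractf left_diff_distrib right_diff_distrib)
    have nG: "norm (G i \<xi>) \<le> 1" for i \<xi> unfolding G_def by (rule norm_GG_le[OF assms(8) p0])
    have \<delta>3: "\<delta> ^ 3 / 108 \<le> \<delta> / 3"
    proof -
      have "\<delta> ^ 3 = \<delta> * \<delta>^2" by (simp add: power3_eq_cube power2_eq_square)
      also have "\<dots> \<le> \<delta> * 1" using assms(10,11) by (intro mult_left_mono) (auto simp: power_le_one)
      finally show ?thesis using assms(10) by simp
    qed
    have pt: "norm ((1 - ee p (int \<xi> * t)) * S \<xi>) \<le> \<delta>/3 * (norm (G u \<xi>) * norm (G v \<xi>))" if "\<xi> < p" for \<xi>
    proof -
      have nS: "norm (S \<xi>) \<le> norm (G s \<xi>) * norm (G u \<xi>) * norm (G v \<xi>)"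
        unfolding S_def prod_norm[symmetric] by (rule prod_le3) (use finI assms(13) u v nG in auto)
      have nn: "0 \<le> norm (G u \<xi>) * norm (G v \<xi>)" by simp
      show ?thesis
      proof (cases "\<xi> \<in> \<Gamma>")
        case True
        have dj: "dn (real \<xi> * real (b j) / real p) \<le> \<rho>" if "j \<in> J" for j
        proof -
          have "b j \<in> B" using b(1) that by auto
          then have "tau_norm p ((\<xi> * b j) mod p) \<le> \<rho>" using True unfolding B_def by blast
          then show ?thesis using tau_norm_dn[OF p0, of \<xi> "b j"] by simp
        qed
        have "norm (1 - ee p (int \<xi> * t)) \<le> 2*pi*dn (of_int (int \<xi> * t) / real p)" by (rule norm_1_ee[OF p0])
        also have "of_int (int \<xi> * t) / real p = (\<Sum>j\<in>J. of_int (c j) * (real \<xi> * real (b j) / real p))"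
          unfolding t_def by (simp add: sum_distrib_left sum_divide_distrib algebra_simps)
        also have "dn \<dots> \<le> (\<Sum>j\<in>J. dn (of_int (c j) * (real \<xi> * real (b j) / real p)))" by (rule dn_sum[OF finJ])
        also have "\<dots> \<le> (\<Sum>j\<in>J. \<bar>of_int (c j)\<bar> * \<rho>)"
        proof (rule sum_mono)
          fix j assume j: "j \<in> J"
          have "dn (of_int (c j) * (real \<xi> * real (b j) / real p)) \<le> \<bar>of_int (c j)\<bar> * dn (real \<xi> * real (b j) / real p)"
            by (rule dn_mult_int)
          also have "\<dots> \<le> \<bar>of_int (c j)\<bar> * \<rho>" using dj[OF j] by (intro mult_left_mono) auto
          finally show "dn (of_int (c j) * (real \<xi> * real (b j) / real p)) \<le> \<bar>of_int (c j)\<bar> * \<rho>" .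
        qed
        also have "\<dots> = real_of_int D * \<rho>" unfolding D_def by (simp add: sum_distrib_right)
        finally have "norm (1 - ee p (int \<xi> * t)) \<le> 2 * pi * (real_of_int D * \<rho>)" by simp
        also have "\<dots> = \<delta> ^ 3 / 108" unfolding \<rho>_def using Dpos by (simp add: field_simps)
        also have "\<dots> \<le> \<delta> / 3" by (rule \<delta>3)
        finally have e: "norm (1 - ee p (int \<xi> * t)) \<le> \<delta> / 3" .
        have "norm ((1 - ee p (int \<xi> * t)) * S \<xi>) = norm (1 - ee p (int \<xi> * t)) * norm (S \<xi>)" by (simp add: norm_mult)
        also have "\<dots> \<le> \<delta>/3 * (norm (G s \<xi>) * norm (G u \<xi>) * norm (G v \<xi>))"
          using e nS assms(10) by (intro mult_mono) auto
        also have "\<dots> \<le> \<delta>/3 * (norm (G u \<xi>) * norm (G v \<xi>))"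
          using nG[of s \<xi>] nn assms(10) by (intro mult_left_mono) (auto simp: mult.assoc intro: mult_left_le_one_le)
        finally show ?thesis .
      next
        case False
        then have "nat ((c s * int \<xi>) mod int p) \<notin> L" using that unfolding \<Gamma>_def by simp
        moreover have "nat ((c s * int \<xi>) mod int p) < p" using p0 by (simp add: nat_less_iff)
        ultimately have "norm (fourier_ind p A (nat ((c s * int \<xi>) mod int p))) < \<nu>" unfolding L_def by auto
        then have gs: "norm (G s \<xi>) < \<nu>" using fourier_GG[OF p0] unfolding G_def by simp
        have e: "norm (1 - ee p (int \<xi> * t)) \<le> 2"
          using norm_triangle_ineq4[of 1 "ee p (int \<xi> * t)"] by simp
        have "norm ((1 - ee p (int \<xi> * t)) * S \<xi>) = norm (1 - ee p (int \<xi> * t)) * norm (S \<xi>)" by (simp add: norm_mult)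
        also have "\<dots> \<le> 2 * (\<nu> * (norm (G u \<xi>) * norm (G v \<xi>)))"
        proof (intro mult_mono e)
          have "norm (S \<xi>) \<le> norm (G s \<xi>) * (norm (G u \<xi>) * norm (G v \<xi>))" using nS by (simp add: mult.assoc)
          also have "\<dots> \<le> \<nu> * (norm (G u \<xi>) * norm (G v \<xi>))" using gs nn by (intro mult_right_mono) auto
          finally show "norm (S \<xi>) \<le> \<nu> * (norm (G u \<xi>) * norm (G v \<xi>))" .
        qed (use nn assms(10) \<nu>_def in auto)
        also have "\<dots> = \<delta>/3 * (norm (G u \<xi>) * norm (G v \<xi>))" unfolding \<nu>_def by simp
        finally show ?thesis .
      qed
    qed
    have amgm: "x * y \<le> (x^2 + y^2) / 2" for x y :: real
    proof -
      have "0 \<le> (x - y)^2" by simp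
      then show ?thesis by (simp add: power2_diff)
    qed
    have sumG: "(\<Sum>\<xi><p. norm (G u \<xi>) * norm (G v \<xi>)) \<le> 1"
    proof -
      have "(\<Sum>\<xi><p. norm (G u \<xi>) * norm (G v \<xi>)) \<le> (\<Sum>\<xi><p. ((norm (G u \<xi>))^2 + (norm (G v \<xi>))^2) / 2)"
        by (rule sum_mono) (rule amgm)
      also have "\<dots> = ((\<Sum>\<xi><p. (norm (G u \<xi>))^2) + (\<Sum>\<xi><p. (norm (G v \<xi>))^2)) / 2"
        by (simp only: sum.distrib sum_divide_distrib[symmetric])
      also have "(\<Sum>\<xi><p. (norm (G u \<xi>))^2) = real (card A) / real p"
        unfolding G_def by (rule parseval[OF assms(6,8) cnd]) (use u Isub in auto)
      also have "(\<Sum>\<xi><p. (norm (G v \<xi>))^2) = real (card A) / real p"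
        unfolding G_def by (rule parseval[OF assms(6,8) cnd]) (use v Isub in auto)
      also have "(real (card A) / real p + real (card A) / real p) / 2 = real (card A) / real p" by simp
      also have "\<dots> \<le> 1" using card_mono[OF _ assms(8)] p0 by simp
      finally show ?thesis .
    qed
    have nsum: "norm (\<Sum>\<xi><p. (1 - ee p (int \<xi> * t)) * S \<xi>) \<le> \<delta> / 3"
    proof -
      have "norm (\<Sum>\<xi><p. (1 - ee p (int \<xi> * t)) * S \<xi>) \<le> (\<Sum>\<xi><p. norm ((1 - ee p (int \<xi> * t)) * S \<xi>))"
        by (rule norm_sum)
      also have "\<dots> \<le> (\<Sum>\<xi><p. \<delta>/3 * (norm (G u \<xi>) * norm (G v \<xi>)))" by (rule sum_mono) (use pt in auto)
      also have "\<dots> = \<delta>/3 * (\<Sum>\<xi><p. norm (G u \<xi>) * norm (G v \<xi>))" by (simp add: sum_distrib_left)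
      also have "\<dots> \<le> \<delta>/3 * 1" using sumG assms(10) by (intro mult_left_mono) auto
      finally show ?thesis by simp
    qed
    have "\<bar>real (N 0) - real (N t)\<bar> = norm ((of_nat (N 0) :: complex) - of_nat (N t))"
      by (metis norm_of_real of_real_diff of_real_of_nat_eq)
    also have "\<dots> = real p ^ (card I - 1) * norm (\<Sum>\<xi><p. (1 - ee p (int \<xi> * t)) * S \<xi>)"
      unfolding diff by (simp add: norm_mult norm_power)
    also have "\<dots> \<le> real p ^ (card I - 1) * (\<delta> / 3)" using nsum by (intro mult_left_mono) auto
    finally have Ndiff: "real (N 0) - real (N t) \<le> real p ^ (card I - 1) * (\<delta> / 3)" by (rule abs_le_D1)
    have Nt: "real (N t) \<ge> 2 * \<delta> / 3 * real p ^ (card I - 1)"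
      using Ndiff assms(12) N0 mult.commute[of \<delta> "real p ^ (card I - 1)"] by linarith
    define y where "y = (\<lambda>(x::nat\<Rightarrow>nat) m. if m \<in> I then x m else b m)"
    define Sol where "Sol = {x\<in>Pi\<^sub>E I (\<lambda>_. A). ((\<Sum>i\<in>I. c i * int (x i)) + t) mod int p = 0}"
    define Bad where "Bad = (\<lambda>(i,m). {x \<in> Sol. x i = y x m})"
    define Pairs where "Pairs = Sigma I (\<lambda>i. {..<k} - {i})"
    have SolN: "card Sol = N t" unfolding Sol_def N_def by simp
    have SolP: "Sol \<subseteq> Pi\<^sub>E I (\<lambda>_. {..<p})" unfolding Sol_def using PiE_mono[of I "\<lambda>_. A" "\<lambda>_. {..<p}"] assms(8) by auto
    have finSol: "finite Sol" using SolP finI by (meson finite_PiE finite_lessThan finite_subset)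
    have cBad: "card (Bad P) \<le> p ^ (card I - 2)" if P: "P \<in> Pairs" for P
    proof -
      obtain i m where im: "P = (i,m)" "i \<in> I" "m < k" "m \<noteq> i" using P unfolding Pairs_def by auto
      have "I - {i,m} \<noteq> {}"
      proof
        assume "I - {i,m} = {}"
        then have "I \<subseteq> {i,m}" by auto
        then have "card I \<le> card {i,m}" by (intro card_mono) auto
        also have "\<dots> \<le> 2" by (simp add: card_insert_if)
        finally show False using assms(4) by simp
      qed
      then obtain r where r: "r \<in> I" "r \<noteq> i" "r \<noteq> m" by blast
      have "card (Bad (i,m)) \<le> p ^ (card I - 2)"
      proof (rule card_restrict_le[OF _ finI r(1) im(2) r(2)])
        show "Bad (i, m) \<subseteq> Pi\<^sub>E I (\<lambda>_. {..<p})" using SolP unfolding Bad_def by auto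
        show "inj_on (\<lambda>x. restrict x (I - {r, i})) (Bad (i, m))"
        proof (rule inj_onI)
          fix x x' assume x: "x \<in> Bad (i,m)" and x': "x' \<in> Bad (i,m)"
            and eq: "restrict x (I - {r, i}) = restrict x' (I - {r, i})"
          have ag: "x j = x' j" if "j \<in> I - {r,i}" for j
            using fun_cong[OF eq, of j] that by simp
          show "x = x'"
          proof (rule sol_determined[OF assms(6) finI r(1) cnd])
            show "r < k" using r(1) Isub by auto
            show "x \<in> Pi\<^sub>E I (\<lambda>_. {..<p})" "x' \<in> Pi\<^sub>E I (\<lambda>_. {..<p})"
              using x x' SolP unfolding Bad_def by auto
            show "((\<Sum>i\<in>I. c i * int (x i)) + t) mod int p = 0"
                 "((\<Sum>i\<in>I. c i * int (x' i)) + t) mod int p = 0"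
              using x x' unfolding Bad_def Sol_def by auto
            fix j assume j: "j \<in> I - {r}"
            show "x j = x' j"
            proof (cases "j = i")
              case False then show ?thesis using ag j by auto
            next
              case True
              have xi: "x i = y x m" "x' i = y x' m" using x x' unfolding Bad_def by auto
              have "y x m = y x' m"
              proof (cases "m \<in> I")
                case True then show ?thesis using ag[of m] r im unfolding y_def by auto
              qed (simp add: y_def)
              then show ?thesis using xi True by simp
            qed
          qed
        qed
      qed
      then show ?thesis using im by simp
    qed
    have PairsS: "Pairs \<subseteq> {..<k} \<times> {..<k}" unfolding Pairs_def using Isub by auto
    have finP: "finite Pairs" using PairsS finite_subset by blast
    have cP: "card Pairs \<le> k * k" using card_mono[OF _ PairsS] by (simp add: card_cartesian_product)
    have cU: "card (\<Union>P\<in>Pairs. Bad P) \<le> k * k * p ^ (card I - 2)"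
    proof -
      have "card (\<Union>P\<in>Pairs. Bad P) \<le> (\<Sum>P\<in>Pairs. card (Bad P))" by (rule card_UN_le[OF finP])
      also have "\<dots> \<le> card Pairs * p ^ (card I - 2)" using sum_bounded_above[of Pairs "\<lambda>P. card (Bad P)", OF cBad] by simp
      also have "\<dots> \<le> k * k * p ^ (card I - 2)" using cP by simp
      finally show ?thesis .
    qed
    have kp: "real (k * k) < \<delta> * real p / 6"
    proof -
      have "6 * real k ^ 2 / \<delta> < real p" by (rule assms(14))
      then have "6 * real k ^ 2 < real p * \<delta>" using assms(10) by (simp add: divide_less_eq)
      then show ?thesis by (simp add: power2_eq_square algebra_simps)
    qed
    have pM: "real p ^ (card I - 1) = real p * real p ^ (card I - 2)"
    proof -
      have "card I - 1 = Suc (card I - 2)" using assms(4) by simp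
      then show ?thesis by simp
    qed
    have "real (card (\<Union>P\<in>Pairs. Bad P)) \<le> real (k * k) * real p ^ (card I - 2)"
    proof -
      have "real (card (\<Union>P\<in>Pairs. Bad P)) \<le> real (k * k * p ^ (card I - 2))" using cU by (simp only: of_nat_le_iff)
      then show ?thesis by simp
    qed
    also have "\<dots> < \<delta> * real p / 6 * real p ^ (card I - 2)"
      using kp p0 by (intro mult_strict_right_mono) auto
    also have "\<dots> = \<delta> / 6 * real p ^ (card I - 1)" using pM by simp
    also have "\<dots> \<le> 2 * \<delta> / 3 * real p ^ (card I - 1)" using assms(10) by (intro mult_right_mono) auto
    also have "\<dots> \<le> real (card Sol)" using Nt SolN by simp
    finally have lt: "card (\<Union>P\<in>Pairs. Bad P) < card Sol" by simp
    have "\<not> Sol \<subseteq> (\<Union>P\<in>Pairs. Bad P)"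
    proof
      assume "Sol \<subseteq> (\<Union>P\<in>Pairs. Bad P)"
      moreover have "finite (\<Union>P\<in>Pairs. Bad P)" using finSol unfolding Bad_def by (auto intro: finite_subset)
      ultimately have "card Sol \<le> card (\<Union>P\<in>Pairs. Bad P)" by (rule card_mono[rotated])
      then show False using lt by simp
    qed
    then obtain x where x: "x \<in> Sol" "x \<notin> (\<Union>P\<in>Pairs. Bad P)" by blast
    have yA: "\<forall>i<k. y x i \<in> A"
    proof (intro allI impI)
      fix i assume "i < k"
      show "y x i \<in> A"
      proof (cases "i \<in> I")
        case True then show ?thesis using x(1) unfolding Sol_def y_def by (auto simp: PiE_def Pi_def)
      next
        case False then have "i \<in> J" using \<open>i < k\<close> unfolding J_def by simp
        then show ?thesis using b(1) False unfolding y_def by auto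
      qed
    qed
    have notbad: "x i \<noteq> y x m" if "i \<in> I" "m < k" "m \<noteq> i" for i m
    proof
      assume "x i = y x m"
      then have "x \<in> Bad (i,m)" using x(1) unfolding Bad_def by simp
      moreover have "(i,m) \<in> Pairs" unfolding Pairs_def using that by simp
      ultimately show False using x(2) by blast
    qed
    have yinj: "inj_on (y x) {..<k}"
    proof (rule inj_onI)
      fix m m' assume m: "m \<in> {..<k}" and m': "m' \<in> {..<k}" and eq: "y x m = y x m'"
      show "m = m'"
      proof (rule ccontr)
        assume ne: "m \<noteq> m'"
        show False
        proof (cases "m \<in> I")
          case True
          then show False using notbad[of m m'] eq m' ne unfolding y_def by (auto split: if_splits)
        next
          case mI: False
          show False
          proof (cases "m' \<in> I")
            case True
            then show False using notbad[of m' m] eq m ne mI unfolding y_def by (auto split: if_splits)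
          next
            case False
            then have "m \<in> J" "m' \<in> J" using m m' mI unfolding J_def by auto
            moreover have "b m = b m'" using eq mI False unfolding y_def by simp
            ultimately show False using b(2) ne by (meson inj_onD)
          qed
        qed
      qed
    qed
    have "(\<Sum>i<k. c i * int (y x i)) = (\<Sum>i\<in>I. c i * int (y x i)) + (\<Sum>i\<in>J. c i * int (y x i))"
      unfolding IJ(1) by (rule sum.union_disjoint[OF finI finJ IJ(2)])
    also have "(\<Sum>i\<in>I. c i * int (y x i)) = (\<Sum>i\<in>I. c i * int (x i))"
      by (rule sum.cong) (auto simp: y_def)
    also have "(\<Sum>i\<in>J. c i * int (y x i)) = t" unfolding t_def
      by (rule sum.cong) (use IJ(2) in \<open>auto simp: y_def\<close>)
    finally have "(\<Sum>i<k. c i * int (y x i)) = (\<Sum>i\<in>I. c i * int (x i)) + t" .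
    moreover have "((\<Sum>i\<in>I. c i * int (x i)) + t) mod int p = 0" using x(1) unfolding Sol_def by simp
    ultimately have sm: "(\<Sum>i<k. c i * int (y x i)) mod int p = 0" by simp
    have "\<exists>z. (\<forall>i<k. z i \<in> A) \<and> inj_on z {..<k} \<and> (\<Sum>i<k. c i * int (z i)) mod int p = 0"
      using yA yinj sm by (intro exI[of _ "y x"]) simp
    then show False using assms(9) unfolding solution_free_def by simp
  qed
  then show ?thesis unfolding Let_def J_def \<nu>_def L_def \<Gamma>_def D_def \<rho>_def B_def .
qed

end
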